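(* Under the assumptions of the context, there is a neighborhood $V$ of $\bar\xi$ such that for each $\xi\in V$ one of the following holds: either \[ \bar\Delta(t,\xi)=|t-\nu_2(\xi)|^2\,(t-\nu_1(\xi))\quad\text{with }\nu_1(\xi)\in\mathbb R,\ \nu_1(\xi)\le0, \] or \[ \bar\Delta(t,\xi)=\prod_{k=1}^3(t-\nu_k(\xi))\quad\text{with all }\nu_k(\xi)\in\mathbb R,\ \nu_k(\xi)\le0 . \]
   Context: Let $a(t,\xi),b(t,\xi)$ be real-valued $C^\infty$ functions on $(-c,T)\times(\mathbb R^n\setminus\{0\})$, homogeneous of degree $0$ in $\xi$, with $\Delta:=4a^3-27b^2\ge0$ for $t\in[0,T)$. Let $|\bar\xi|=1$ with $a(0,\bar\xi)=0$, $\partial_ta(0,\bar\xi)\ne0$. Near $(0,\bar\xi)$ write $\Delta(t,\xi)=e_2(t,\xi)\bar\Delta(t,\xi)$ with $e_2>0$ smooth and $\bar\Delta(t,\xi)=t^3+a_1(\xi)t^2+a_2(\xi)t+a_3(\xi)$, $a_j$ smooth real-valued with $a_j(\bar\xi)=0$; $\nu_k(\xi)$ denote the roots in $t$ of $\bar\Delta(t,\xi)=0$. *)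

theory Defs
  imports "HOL-Analysis.Analysis"
begin

fun Ck_on :: "nat \<Rightarrow> 'a::euclidean_space set \<Rightarrow> ('a \<Rightarrow> real) \<Rightarrow> bool" where
  "Ck_on 0 S f \<longleftrightarrow> continuous_on S f"
| "Ck_on (Suc k) S f \<longleftrightarrow> continuous_on S f \<and> f differentiable_on S \<and>
     (\<forall>v. Ck_on k S (\<lambda>x. frechet_derivative f (at x) v))"

definition smooth_on :: "'a::euclidean_space set \<Rightarrow> ('a \<Rightarrow> real) \<Rightarrow> bool" where
  "smooth_on S f \<longleftrightarrow> (\<forall>k. Ck_on k S f)"

definition Dbar :: "('n \<Rightarrow> real) \<Rightarrow> ('n \<Rightarrow> real) \<Rightarrow> ('n \<Rightarrow> real) \<Rightarrow> real \<Rightarrow> 'n \<Rightarrow> real" where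
  "Dbar a1 a2 a3 t \<xi> = t ^ 3 + a1 \<xi> * t ^ 2 + a2 \<xi> * t + a3 \<xi>"

end

theory Submission
  imports Defs
begin



lemma cubic_root_nonpos:
  fixes p q r :: real
  assumes "r \<ge> 0"
  shows "\<exists>x\<le>0. x^3 + p*x^2 + q*x + r = 0"
proof -
  define M where "M = 1 + \<bar>p\<bar> + \<bar>q\<bar> + \<bar>r\<bar>"
  have M1: "M \<ge> 1" unfolding M_def by simp
  have P: "p*M^2 \<le> \<bar>p\<bar>*M^2" by (simp add: mult_right_mono)
  have MM: "M \<le> M^2" using mult_left_mono[of 1 M M] M1 by (simp add: power2_eq_square)
  have M2: "1 \<le> M^2" using M1 MM by linarith
  have "- q*M \<le> \<bar>q\<bar>*M" using mult_right_mono[of "-q" "\<bar>q\<bar>" M] M1 by simp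
  also have "\<dots> \<le> \<bar>q\<bar>*M^2" using MM by (simp add: mult_left_mono)
  finally have "- q*M \<le> \<bar>q\<bar>*M^2" .
  moreover have "r \<le> \<bar>r\<bar>*M^2" using mult_left_mono[OF M2, of "\<bar>r\<bar>"] by linarith
  ultimately have "(-M)^3 + p*(-M)^2 + q*(-M) + r \<le> - (M^3) + (\<bar>p\<bar>+\<bar>q\<bar>+\<bar>r\<bar>)*M^2"
    using P by (simp add: algebra_simps)
  also have "\<dots> = - (M^2)" unfolding M_def by (simp add: algebra_simps power2_eq_square power3_eq_cube)
  also have "\<dots> \<le> 0" by simp
  finally have a: "(-M)^3 + p*(-M)^2 + q*(-M) + r \<le> 0" .
  have "\<exists>x\<ge>-M. x \<le> 0 \<and> x^3 + p*x^2 + q*x + r = 0"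
    by (rule IVT[of "\<lambda>x. x^3 + p*x^2 + q*x + r"]) (use a assms M1 in \<open>auto intro!: continuous_intros\<close>)
  then show ?thesis by auto
qed

lemma cubic_nonneg_cases:
  fixes p q r :: real
  assumes nn: "\<And>t. t \<ge> 0 \<Longrightarrow> t^3 + p*t^2 + q*t + r \<ge> 0"
  shows "(\<exists>\<nu>1::real. \<exists>\<nu>2::complex. \<nu>1 \<le> 0 \<and>
        (\<forall>t::real. t^3 + p*t^2 + q*t + r = (cmod (complex_of_real t - \<nu>2))\<^sup>2 * (t - \<nu>1)))
   \<or> (\<exists>\<nu>1 \<nu>2 \<nu>3::real. \<nu>1 \<le> 0 \<and> \<nu>2 \<le> 0 \<and> \<nu>3 \<le> 0 \<and>
        (\<forall>t::real. t^3 + p*t^2 + q*t + r = (t - \<nu>1) * (t - \<nu>2) * (t - \<nu>3)))"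
proof -
  obtain vv :: real where v0: "vv \<le> 0" and rv: "vv^3 + p* vv^2 + q* vv + r = 0"
    using cubic_root_nonpos[of r p q] nn[of 0] by auto
  define B where "B = p + vv"
  define C where "C = q + vv*p + vv^2"
  have fac: "t^3 + p*t^2 + q*t + r = (t - vv) * (t^2 + B*t + C)" for t
  proof -
    have "t^3 + p*t^2 + q*t + r = (t - vv) * (t^2 + B*t + C) + (vv^3 + p* vv^2 + q* vv + r)"
      unfolding B_def C_def by (simp add: algebra_simps power2_eq_square power3_eq_cube)
    then show ?thesis using rv by simp
  qed
  show ?thesis
  proof (cases "B^2 - 4*C \<le> 0")
    case True
    define w where "w = Complex (-B/2) (sqrt (C - B^2/4))"
    have "(cmod (complex_of_real t - w))\<^sup>2 = t^2 + B*t + C" for t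
    proof -
      have "C - B^2/4 \<ge> 0" using True by simp
      then show ?thesis unfolding cmod_power2 w_def
        by (simp add: algebra_simps power2_eq_square)
    qed
    then have "\<forall>t. t^3 + p*t^2 + q*t + r = (cmod (complex_of_real t - w))\<^sup>2 * (t - vv)"
      using fac by simp
    then show ?thesis using v0 by blast
  next
    case False
    define D where "D = B^2 - 4*C"
    have D: "D > 0" using False D_def by simp
    define r1 where "r1 = (-B - sqrt D)/2"
    define r2 where "r2 = (-B + sqrt D)/2"
    have sD: "sqrt D ^2 = D" using D by simp
    have q2: "t^2 + B*t + C = (t - r1) * (t - r2)" for t
    proof -
      have ss: "sqrt D * sqrt D = D" using D by simp
      show ?thesis using ss unfolding r1_def r2_def D_def power2_eq_square by algebra
    qed
    have lt: "r1 < r2" unfolding r1_def r2_def using D by simp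
    have "r2 \<le> 0"
    proof (rule ccontr)
      assume "\<not> r2 \<le> 0"
      define t where "t = (max r1 0 + r2)/2"
      have t0: "t > 0" and t1: "t > r1" and t2: "t < r2" using lt \<open>\<not> r2 \<le> 0\<close> unfolding t_def by auto
      have "(t - r1) * (t - r2) < 0" using t1 t2 by (simp add: mult_pos_neg)
      moreover have "t - vv > 0" using t0 v0 by simp
      ultimately have "(t - vv) * ((t - r1) * (t - r2)) < 0" by (simp add: mult_pos_neg)
      then show False using nn[of t] t0 fac[of t] q2[of t] by simp
    qed
    then have "\<forall>t. t^3 + p*t^2 + q*t + r = (t - vv) * (t - r1) * (t - r2)"
      using fac q2 by (simp add: mult.assoc)
    moreover have "r1 \<le> 0" using lt \<open>r2 \<le> 0\<close> by simp
    ultimately have "\<exists>\<nu>1 \<nu>2 \<nu>3::real. \<nu>1 \<le> 0 \<and> \<nu>2 \<le> 0 \<and> \<nu>3 \<le> 0 \<and>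
        (\<forall>t::real. t^3 + p*t^2 + q*t + r = (t - \<nu>1) * (t - \<nu>2) * (t - \<nu>3))"
      using v0 \<open>r2 \<le> 0\<close> by (intro exI[of _ vv] exI[of _ r1] exI[of _ r2]) simp
    then show ?thesis by (rule disjI2)
  qed
qed

lemma cubic_pos_far:
  fixes d t x y z :: real
  assumes d: "d > 0" "t \<ge> d" and b: "\<bar>x\<bar> < d/3" "\<bar>y\<bar> < d^2/3" "\<bar>z\<bar> < d^3/3"
  shows "t^3 + x*t^2 + y*t + z > 0"
proof -
  have t0: "t > 0" using d by simp
  have "- x*t^2 \<le> \<bar>x\<bar>*t^2" using mult_right_mono[of "-x" "\<bar>x\<bar>" "t^2"] by simp
  also have "\<dots> \<le> (d/3)*t^2" using b(1) by (intro mult_right_mono) auto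
  also have "\<dots> \<le> (t/3)*t^2" using d by (intro mult_right_mono) auto
  finally have 1: "- x*t^2 \<le> t^3/3" by (simp add: power2_eq_square power3_eq_cube)
  have "- y*t \<le> \<bar>y\<bar>*t" using t0 mult_right_mono[of "-y" "\<bar>y\<bar>" "t"] by simp
  also have "\<dots> \<le> (d^2/3)*t" using b(2) t0 by (intro mult_right_mono) auto
  also have "\<dots> \<le> (t^2/3)*t" using d t0 by (intro mult_right_mono divide_right_mono power_mono) auto
  finally have 2: "- y*t \<le> t^3/3" by (simp add: power2_eq_square power3_eq_cube)
  have "d^3 \<le> t^3" using d by (intro power_mono) auto
  then have 3: "- z < t^3/3" using b(3) by linarith
  show ?thesis using 1 2 3 by linarith
qed
theorem lemma4p3:
  fixes a b e2 :: "real \<times> (real ^ 'n) \<Rightarrow> real"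
    and a1 a2 a3 :: "real ^ 'n \<Rightarrow> real"
    and c T :: real and \<xi>0 :: "real ^ 'n"
  assumes cT: "0 < c" "0 < T"
    and a_smooth: "smooth_on ({-c<..<T} \<times> (UNIV - {0})) a"
    and b_smooth: "smooth_on ({-c<..<T} \<times> (UNIV - {0})) b"
    and a_hom: "\<And>t \<xi> s. t \<in> {-c<..<T} \<Longrightarrow> \<xi> \<noteq> 0 \<Longrightarrow> s > 0 \<Longrightarrow> a (t, s *\<^sub>R \<xi>) = a (t, \<xi>)"
    and b_hom: "\<And>t \<xi> s. t \<in> {-c<..<T} \<Longrightarrow> \<xi> \<noteq> 0 \<Longrightarrow> s > 0 \<Longrightarrow> b (t, s *\<^sub>R \<xi>) = b (t, \<xi>)"
    and hyp: "\<And>t \<xi>. t \<in> {0..<T} \<Longrightarrow> \<xi> \<noteq> 0 \<Longrightarrow> 4 * (a (t, \<xi>)) ^ 3 - 27 * (b (t, \<xi>)) ^ 2 \<ge> 0"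
    and norm1: "norm \<xi>0 = 1"
    and a0: "a (0, \<xi>0) = 0"
    and dta: "deriv (\<lambda>t. a (t, \<xi>0)) 0 \<noteq> 0"
    and U: "open U" "(0, \<xi>0) \<in> U" "U \<subseteq> {-c<..<T} \<times> (UNIV - {0})"
    and e2_smooth: "smooth_on U e2"
    and e2_pos: "\<And>z. z \<in> U \<Longrightarrow> e2 z > 0"
    and W: "open W" "\<xi>0 \<in> W"
    and aj_smooth: "smooth_on W a1" "smooth_on W a2" "smooth_on W a3"
    and aj0: "a1 \<xi>0 = 0" "a2 \<xi>0 = 0" "a3 \<xi>0 = 0"
    and factor: "\<And>t \<xi>. (t, \<xi>) \<in> U \<Longrightarrow> \<xi> \<in> W \<Longrightarrow>
       4 * (a (t, \<xi>)) ^ 3 - 27 * (b (t, \<xi>)) ^ 2 = e2 (t, \<xi>) * Dbar a1 a2 a3 t \<xi>"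
  shows "\<exists>V. open V \<and> \<xi>0 \<in> V \<and> (\<forall>\<xi>\<in>V.
     (\<exists>\<nu>1::real. \<exists>\<nu>2::complex. \<nu>1 \<le> 0 \<and>
        (\<forall>t::real. Dbar a1 a2 a3 t \<xi> = (cmod (complex_of_real t - \<nu>2))\<^sup>2 * (t - \<nu>1)))
   \<or> (\<exists>\<nu>1 \<nu>2 \<nu>3::real. \<nu>1 \<le> 0 \<and> \<nu>2 \<le> 0 \<and> \<nu>3 \<le> 0 \<and>
        (\<forall>t::real. Dbar a1 a2 a3 t \<xi> = (t - \<nu>1) * (t - \<nu>2) * (t - \<nu>3))))"
  proof -
  obtain e where e0: "e > 0" and eU: "ball (0, \<xi>0) e \<subseteq> U"
    using U(1,2) open_contains_ball by blast
  define d where "d = min (e/2) T"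
  have d0: "d > 0" using e0 cT unfolding d_def by simp
  have nn: "Dbar a1 a2 a3 t \<xi> \<ge> 0"
    if \<xi>W: "\<xi> \<in> W" and dx: "dist \<xi> \<xi>0 < e/2" and t0: "0 \<le> t" and td: "t < d" for t \<xi>
  proof -
    have "dist (0, \<xi>0) (t, \<xi>) = sqrt ((dist 0 t)^2 + (dist \<xi>0 \<xi>)^2)"
      by (simp add: dist_Pair_Pair)
    also have "\<dots> \<le> \<bar>dist 0 t\<bar> + \<bar>dist \<xi>0 \<xi>\<bar>" by (rule sqrt_sum_squares_le_sum_abs)
    also have "\<dots> < e" using dx t0 td unfolding d_def by (simp add: dist_commute dist_real_def)
    finally have "(t, \<xi>) \<in> U" using eU by auto
    then have inU: "(t, \<xi>) \<in> U" and xn: "\<xi> \<noteq> 0" and tT: "t < T" using U(3) by auto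
    have "0 \<le> 4 * (a (t, \<xi>)) ^ 3 - 27 * (b (t, \<xi>)) ^ 2" using hyp[of t \<xi>] t0 tT xn by simp
    also have "\<dots> = e2 (t, \<xi>) * Dbar a1 a2 a3 t \<xi>" using factor inU \<xi>W by simp
    finally show ?thesis using e2_pos[OF inU] by (simp add: zero_le_mult_iff)
  qed
  have cont: "isCont f \<xi>0" if "smooth_on W f" for f :: "real ^ 'n \<Rightarrow> real"
  proof -
    have "continuous_on W f" using that unfolding smooth_on_def
      by (metis Ck_on.simps(1))
    then show ?thesis using W continuous_on_eq_continuous_at by blast
  qed
  have near: "\<exists>r>0. \<forall>\<xi>. dist \<xi> \<xi>0 < r \<longrightarrow> \<bar>f \<xi>\<bar> < eps"
    if "smooth_on W f" "f \<xi>0 = 0" "eps > 0" for f :: "real ^ 'n \<Rightarrow> real" and eps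
    using cont[OF that(1)] that(2,3) unfolding continuous_at_eps_delta
    by (auto simp: dist_real_def)
  obtain r1 where r1: "r1 > 0" "\<And>\<xi>. dist \<xi> \<xi>0 < r1 \<Longrightarrow> \<bar>a1 \<xi>\<bar> < d/3"
    using near[OF aj_smooth(1) aj0(1), of "d/3"] d0 by auto
  obtain r2 where r2: "r2 > 0" "\<And>\<xi>. dist \<xi> \<xi>0 < r2 \<Longrightarrow> \<bar>a2 \<xi>\<bar> < d^2/3"
    using near[OF aj_smooth(2) aj0(2), of "d^2/3"] d0 by auto
  obtain r3 where r3: "r3 > 0" "\<And>\<xi>. dist \<xi> \<xi>0 < r3 \<Longrightarrow> \<bar>a3 \<xi>\<bar> < d^3/3"
    using near[OF aj_smooth(3) aj0(3), of "d^3/3"] d0 by auto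
  define R where "R = min (e/2) (min r1 (min r2 r3))"
  have R0: "R > 0" using e0 r1 r2 r3 unfolding R_def by simp
  define V where "V = ball \<xi>0 R \<inter> W"
  have "open V" unfolding V_def using W by auto
  moreover have "\<xi>0 \<in> V" unfolding V_def using W R0 by auto
  moreover have "\<forall>\<xi>\<in>V.
     (\<exists>\<nu>1::real. \<exists>\<nu>2::complex. \<nu>1 \<le> 0 \<and>
        (\<forall>t::real. Dbar a1 a2 a3 t \<xi> = (cmod (complex_of_real t - \<nu>2))\<^sup>2 * (t - \<nu>1)))
   \<or> (\<exists>\<nu>1 \<nu>2 \<nu>3::real. \<nu>1 \<le> 0 \<and> \<nu>2 \<le> 0 \<and> \<nu>3 \<le> 0 \<and>
        (\<forall>t::real. Dbar a1 a2 a3 t \<xi> = (t - \<nu>1) * (t - \<nu>2) * (t - \<nu>3)))"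
  proof
    fix \<xi> assume "\<xi> \<in> V"
    then have \<xi>W: "\<xi> \<in> W" and dx: "dist \<xi> \<xi>0 < R" unfolding V_def by (auto simp: dist_commute)
    have allnn: "t^3 + a1 \<xi> * t^2 + a2 \<xi> * t + a3 \<xi> \<ge> 0" if t0: "t \<ge> 0" for t
    proof (cases "t < d")
      case True
      then show ?thesis using nn[OF \<xi>W _ t0 True] dx unfolding R_def Dbar_def by simp
    next
      case False
      have "t^3 + a1 \<xi> * t^2 + a2 \<xi> * t + a3 \<xi> > 0"
        by (rule cubic_pos_far[OF d0]) (use False dx r1 r2 r3 in \<open>auto simp: R_def\<close>)
      then show ?thesis by simp
    qed
    show "(\<exists>\<nu>1::real. \<exists>\<nu>2::complex. \<nu>1 \<le> 0 \<and>
        (\<forall>t::real. Dbar a1 a2 a3 t \<xi> = (cmod (complex_of_real t - \<nu>2))\<^sup>2 * (t - \<nu>1)))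
   \<or> (\<exists>\<nu>1 \<nu>2 \<nu>3::real. \<nu>1 \<le> 0 \<and> \<nu>2 \<le> 0 \<and> \<nu>3 \<le> 0 \<and>
        (\<forall>t::real. Dbar a1 a2 a3 t \<xi> = (t - \<nu>1) * (t - \<nu>2) * (t - \<nu>3)))"
      unfolding Dbar_def by (rule cubic_nonneg_cases[OF allnn])
  qed
  ultimately show ?thesis by blast
qed

end
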